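(* Let $P$ be the uniform distribution on $[0,1]$, let $\beta=\{\frac14,\frac12\}$, and let $V_n$ ($n\geq2$) be the $n$th conditional quantization error of $P$ with respect to $\beta$, with $V_\infty=\lim_{n\to\infty}V_n$. Then the $1$-dimensional conditional quantization coefficient exists as a finite positive number and equals $\frac1{12}$, i.e. $\lim_{n\to\infty}n^2(V_n-V_\infty)=\frac1{12}$.
   Context: For a Borel probability measure $P$ on $\mathbb{R}$ and a finite set $\beta\subset\mathbb{R}$ with $\mathrm{card}(\beta)=r$, for $n\geq r$ the $n$th conditional quantization error is $V_n=\inf\{\int\min_{a\in\alpha\cup\beta}(x-a)^2\,dP(x):\alpha\subset\mathbb{R},\ \mathrm{card}(\alpha)\leq n-r\}$. *)

theory Defs
  imports "HOL-Probability.Probability"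
begin

text \<open>The n-th conditional quantization error of a Borel probability measure P on the reals
  with respect to a finite constraint set beta (meaningful for n >= card beta).\<close>
definition cond_quant_err :: "real measure \<Rightarrow> real set \<Rightarrow> nat \<Rightarrow> real" where
  "cond_quant_err P \<beta> n =
     (INF \<alpha> \<in> {\<alpha> :: real set. finite \<alpha> \<and> card \<alpha> \<le> n - card \<beta>}.
        integral\<^sup>L P (\<lambda>x. Min ((\<lambda>a. (x - a)\<^sup>2) ` (\<alpha> \<union> \<beta>))))"

definition unif01 :: "real measure" where
  "unif01 = uniform_measure lborel {0..1}"

end

theory Submission
  imports Defs "HOL-Real_Asymp.Real_Asymp"
begin

definition phi :: "real set \<Rightarrow> real \<Rightarrow> real" where
  "phi S x = Min ((\<lambda>a. (x - a)\<^sup>2) ` S)"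

lemma phi_insert: "finite S \<Longrightarrow> S \<noteq> {} \<Longrightarrow> phi (insert a S) x = min ((x-a)\<^sup>2) (phi S x)"
  unfolding phi_def by (simp add: Min_insert)

lemma phi_single: "phi {a} x = (x-a)\<^sup>2" unfolding phi_def by simp

lemma phi_cont: "finite S \<Longrightarrow> S \<noteq> {} \<Longrightarrow> continuous_on A (phi S)"
proof (induction S rule: finite_ne_induct)
  case (singleton x)
  then show ?case by (simp add: phi_single[abs_def] continuous_intros)
next
  case (insert x F)
  have "phi (insert x F) = (\<lambda>y. min ((y-x)\<^sup>2) (phi F y))"
    by (rule ext) (simp add: phi_insert insert)
  then show ?case using insert by (simp add: continuous_intros)
qed

lemma unif01_integral:
  fixes f :: "real \<Rightarrow> real"
  assumes "continuous_on UNIV f"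
  shows "integral\<^sup>L unif01 f = integral {0..1} f"
proof -
  have m: "f \<in> borel_measurable borel" using assms by (simp add: borel_measurable_continuous_onI)
  have "unif01 = density lborel (\<lambda>x. ennreal (indicator {0..1::real} x))"
    unfolding unif01_def uniform_measure_def
    by (intro arg_cong[where f="density lborel"] ext) (simp add: indicator_def)
  then have "integral\<^sup>L unif01 f = integral\<^sup>L lborel (\<lambda>x. indicator {0..1::real} x *\<^sub>R f x)"
  proof -
    have "integral\<^sup>L (density lborel (\<lambda>x. ennreal (indicator {0..1::real} x))) f = integral\<^sup>L lborel (\<lambda>x. indicator {0..1::real} x *\<^sub>R f x)"
      by (rule integral_density) (use m in auto)
    then show ?thesis using \<open>unif01 = _\<close> by simp
  qed
  also have "\<dots> = integral {0..1} f"
    using set_borel_integral_eq_integral(2)[OF borel_integrable_atLeastAtMost'[of 0 1 f]]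
      assms continuous_on_subset unfolding set_lebesgue_integral_def by blast
  finally show ?thesis .
qed
lemma sq_integral:
  fixes u v b :: real
  assumes "u \<le> v"
  shows "integral {u..v} (\<lambda>x. (x - b)\<^sup>2) = ((v-b)^3 - (u-b)^3)/3"
proof -
  have "((\<lambda>x. (x - b)\<^sup>2) has_integral ((\<lambda>x. (x-b)^3/3) v - (\<lambda>x. (x-b)^3/3) u)) {u..v}"
  proof (rule fundamental_theorem_of_calculus[of u v "\<lambda>x. (x-b)^3/3"])
    show "u \<le> v" by (rule assms)
  next
    fix x assume "x \<in> {u..v}"
    have "((\<lambda>x. (x-b)^3/3) has_real_derivative (x - b)\<^sup>2) (at x within {u..v})"
      by (auto intro!: derivative_eq_intros simp: power2_eq_square)
    then show "((\<lambda>x. (x-b)^3/3) has_vector_derivative (x - b)\<^sup>2) (at x within {u..v})"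
      by (simp add: has_real_derivative_iff_has_vector_derivative)
  qed
  then show ?thesis by (simp add: integral_unique)
qed

lemma sq_integral_lower:
  fixes u v b :: real
  assumes "u \<le> v"
  shows "integral {u..v} (\<lambda>x. (x - b)\<^sup>2) \<ge> (v-u)^3/12"
proof -
  define p where "p = v - b"
  define q where "q = b - u"
  have pq: "p + q \<ge> 0" using assms by (simp add: p_def q_def)
  have "4*(p^3+q^3) - (p+q)^3 = 3*(p+q)*(p-q)^2" by (simp add: algebra_simps power2_eq_square power3_eq_cube)
  also have "\<dots> \<ge> 0" using pq by simp
  finally have "(p+q)^3/12 \<le> (p^3+q^3)/3" by simp
  moreover have "(v-b)^3 - (u-b)^3 = p^3 + q^3" by (simp add: p_def q_def power3_eq_cube algebra_simps)
  moreover have "p + q = v - u" by (simp add: p_def q_def)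
  ultimately show ?thesis using sq_integral[OF assms, of b] by simp
qed

lemma holder_step:
  fixes A B m :: real
  assumes "A \<ge> 0" "B \<ge> 0" "m \<ge> 1"
  shows "(A+B)^3/(m+1)^2 \<le> A^3/m^2 + B^3"
proof -
  define a where "a = A/m"
  have A: "A = m*a" using assms by (simp add: a_def)
  have a0: "a \<ge> 0" using assms by (simp add: a_def)
  have "(m+1)^2*(m*a^3 + B^3) - (m*a+B)^3 = m*((a-B)^2*((2*m+1)*a + (m+2)*B))"
    by (simp add: algebra_simps power2_eq_square power3_eq_cube)
  also have "\<dots> \<ge> 0" using assms a0 by (intro mult_nonneg_nonneg) auto
  finally have "(m*a+B)^3 \<le> (m+1)^2*(m*a^3 + B^3)" by simp
  then have "(m*a+B)^3/(m+1)^2 \<le> m*a^3 + B^3" using assms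
    by (simp add: divide_simps mult.commute)
  moreover have "A^3/m^2 = m*a^3" using assms A by (simp add: power2_eq_square power3_eq_cube)
  ultimately show ?thesis using A by simp
qed

lemma lower_bound:
  assumes "finite S"
  shows "S \<noteq> {} \<longrightarrow> (\<forall>u v. u \<le> v \<longrightarrow> integral {u..v} (phi S) \<ge> (v-u)^3/(12 * (real (card S))^2))"
  using assms
proof (induction S rule: finite_linorder_max_induct)
  case empty
  then show ?case by simp
next
  case (insert b A)
  show ?case
  proof (intro impI allI)
    fix u v :: real assume uv: "u \<le> v"
    show "integral {u..v} (phi (insert b A)) \<ge> (v-u)^3/(12 * (real (card (insert b A)))^2)"
    proof (cases "A = {}")
      case True
      then show ?thesis using sq_integral_lower[OF uv, of b] by (simp add: phi_single[abs_def])
    next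
      case False
      define m where "m = real (card A)"
      have m1: "m \<ge> 1" using False insert.hyps(1) by (simp add: m_def Suc_leI card_gt_0_iff)
      have bA: "b \<notin> A" using insert.hyps(2) by auto
      have card: "real (card (insert b A)) = m + 1" using bA insert.hyps(1) by (simp add: m_def)
      define a' where "a' = Max A"
      have a'A: "a' \<in> A" using False insert.hyps(1) by (simp add: a'_def)
      have a'b: "a' < b" using a'A insert.hyps(2) by auto
      have le_a': "\<And>a. a \<in> A \<Longrightarrow> a \<le> a'" using insert.hyps(1) by (simp add: a'_def)
      define c where "c = (a'+b)/2"
      have phiA_le: "phi A x \<le> (x-a')\<^sup>2" for x
        unfolding phi_def using a'A insert.hyps(1) by (auto intro: Min_le)
      have left: "phi (insert b A) x = phi A x" if "x \<le> c" for x
      proof -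
        have "(x-b)\<^sup>2 - (x-a')\<^sup>2 = (b-a')*((a'+b) - 2*x)" by (simp add: algebra_simps power2_eq_square)
        also have "\<dots> \<ge> 0" using that a'b unfolding c_def by (intro mult_nonneg_nonneg) auto
        finally have "(x-a')\<^sup>2 \<le> (x-b)\<^sup>2" by simp
        then show ?thesis using phiA_le[of x] phi_insert[OF insert.hyps(1) False] by simp
      qed
      have right: "phi (insert b A) x = (x-b)\<^sup>2" if "x \<ge> c" for x
      proof -
        have "(x-b)\<^sup>2 \<le> phi A x"
          unfolding phi_def
        proof (subst Min_ge_iff)
          show "finite ((\<lambda>a. (x - a)\<^sup>2) ` A)" using insert.hyps(1) by simp
          show "(\<lambda>a. (x - a)\<^sup>2) ` A \<noteq> {}" using False by simp
          show "\<forall>y\<in>(\<lambda>a. (x - a)\<^sup>2) ` A. (x - b)\<^sup>2 \<le> y"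
          proof
            fix y assume "y \<in> (\<lambda>a. (x - a)\<^sup>2) ` A"
            then obtain a where aA: "a \<in> A" and y: "y = (x-a)\<^sup>2" by auto
            have "a \<le> a'" using le_a' aA .
            have "(x-a)\<^sup>2 - (x-b)\<^sup>2 = (b-a)*(2*x - (a+b))" by (simp add: algebra_simps power2_eq_square)
            also have "\<dots> \<ge> 0" using that a'b \<open>a \<le> a'\<close> unfolding c_def by (intro mult_nonneg_nonneg) auto
            finally have "(x-b)\<^sup>2 \<le> (x-a)\<^sup>2" by simp
            then show "(x - b)\<^sup>2 \<le> y" using y by simp
          qed
        qed
        then show ?thesis using phi_insert[OF insert.hyps(1) False] by simp
      qed
      have IH: "\<And>u v. u \<le> v \<Longrightarrow> integral {u..v} (phi A) \<ge> (v-u)^3/(12 * m^2)"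
        using insert.IH False by (simp add: m_def)
      have "(v-u)^3/(12*(m+1)^2) \<le> integral {u..v} (phi (insert b A))"
      proof (cases "v \<le> c")
        case True
        have "integral {u..v} (phi (insert b A)) = integral {u..v} (phi A)"
          using True left by (intro integral_cong) auto
        moreover have "(v-u)^3/(12*(m+1)^2) \<le> (v-u)^3/(12*m^2)"
          using m1 uv by (intro divide_left_mono) (auto simp: power_mono)
        ultimately show ?thesis using IH[OF uv] by simp
      next
        case vc: False
        show ?thesis
        proof (cases "c \<le> u")
          case True
          have "integral {u..v} (phi (insert b A)) = integral {u..v} (\<lambda>x. (x-b)\<^sup>2)"
            using True right by (intro integral_cong) auto
          moreover have "(v-u)^3/(12*(m+1)^2) \<le> (v-u)^3/12"
            using m1 uv by (intro divide_left_mono) (auto simp: power_mono)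
          ultimately show ?thesis using sq_integral_lower[OF uv, of b] by simp
        next
          case False
          have uc: "u \<le> c" "c \<le> v" using False vc by auto
          have integ: "phi (insert b A) integrable_on {u..v}"
            using insert.hyps(1) by (intro integrable_continuous_interval phi_cont) auto
          have "integral {u..v} (phi (insert b A)) = integral {u..c} (phi (insert b A)) + integral {c..v} (phi (insert b A))"
            using Henstock_Kurzweil_Integration.integral_combine[OF uc integ] by simp
          also have "integral {u..c} (phi (insert b A)) = integral {u..c} (phi A)"
            using left by (intro integral_cong) auto
          also have "integral {c..v} (phi (insert b A)) = integral {c..v} (\<lambda>x. (x-b)\<^sup>2)"
            using right by (intro integral_cong) auto
          finally have eq: "integral {u..v} (phi (insert b A)) = integral {u..c} (phi A) + integral {c..v} (\<lambda>x. (x-b)\<^sup>2)" .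
          have "(v-u)^3/(m+1)^2 \<le> (c-u)^3/m^2 + (v-c)^3"
            using holder_step[of "c-u" "v-c" m] uc m1 by simp
          then have "(v-u)^3/(12*(m+1)^2) \<le> (c-u)^3/(12*m^2) + (v-c)^3/12" by simp
          also have "\<dots> \<le> integral {u..c} (phi A) + integral {c..v} (\<lambda>x. (x-b)\<^sup>2)"
            using IH[OF uc(1)] sq_integral_lower[OF uc(2), of b] by simp
          finally show ?thesis using eq by simp
        qed
      qed
      then show ?thesis using card by simp
    qed
  qed
qed

lemma sq_left: "(a::real) \<le> b \<Longrightarrow> integral {a..b} (\<lambda>x. (x - a)\<^sup>2) = (b-a)^3/3"
  by (simp add: sq_integral)

lemma sq_right: "(a::real) \<le> b \<Longrightarrow> integral {a..b} (\<lambda>x. (x - b)\<^sup>2) = (b-a)^3/3"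
  by (simp add: sq_integral power3_eq_cube algebra_simps)

lemma phi_le: "finite S \<Longrightarrow> a \<in> S \<Longrightarrow> phi S x \<le> (x-a)\<^sup>2"
  unfolding phi_def by (auto intro: Min_le)

lemma phi_mono: "finite T \<Longrightarrow> S \<subseteq> T \<Longrightarrow> S \<noteq> {} \<Longrightarrow> phi T x \<le> phi S x"
  unfolding phi_def by (rule Min_antimono) auto

lemma integral_le_sq:
  fixes a b c :: real
  assumes "finite S" "c \<in> S" "a \<le> b"
  shows "integral {a..b} (phi S) \<le> integral {a..b} (\<lambda>x. (x - c)\<^sup>2)"
  using assms
  by (intro integral_le integrable_continuous_interval phi_cont) (auto intro!: continuous_intros phi_le)

lemma cell_bound:
  fixes a h :: real
  assumes "finite S" "a \<in> S" "a + h \<in> S" "h \<ge> 0"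
  shows "integral {a..a+h} (phi S) \<le> h^3/12"
proof -
  have integ: "phi S integrable_on {a..a+h}"
    using assms by (intro integrable_continuous_interval phi_cont) auto
  have "integral {a..a+h} (phi S) = integral {a..a+h/2} (phi S) + integral {a+h/2..a+h} (phi S)"
    using Henstock_Kurzweil_Integration.integral_combine[of a "a+h/2" "a+h", OF _ _ integ] assms by simp
  also have "\<dots> \<le> integral {a..a+h/2} (\<lambda>x. (x - a)\<^sup>2) + integral {a+h/2..a+h} (\<lambda>x. (x - (a+h))\<^sup>2)"
    using assms by (intro add_mono integral_le_sq) auto
  also have "\<dots> = (h/2)^3/3 + (h/2)^3/3"
    using assms sq_left[of a "a+h/2"] sq_right[of "a+h/2" "a+h"] by simp
  also have "\<dots> = h^3/12" by (simp add: power3_eq_cube)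
  finally show ?thesis .
qed

definition G :: "real \<Rightarrow> nat \<Rightarrow> real set" where
  "G h m = (\<lambda>j. real j * h) ` {1..m}"

lemma G_finite: "finite (G h m)" by (simp add: G_def)

lemma G_Suc: "G h (Suc m) = insert (real (Suc m) * h) (G h m)"
  unfolding G_def by (simp add: atLeastAtMostSuc_conv image_insert)

lemma G_mem: "1 \<le> j \<Longrightarrow> j \<le> m \<Longrightarrow> real j * h \<in> G h m"
  unfolding G_def by auto

lemma upper_grid:
  fixes h :: real
  assumes "h > 0" "m \<ge> 1"
  shows "integral {0..real m * h} (phi (G h m)) \<le> h^3/3 + (real m - 1)*h^3/12"
  using assms(2)
proof (induction m rule: nat_induct_at_least)
  case base
  have "integral {0..h} (phi (G h 1)) \<le> integral {0..h} (\<lambda>x. (x - h)\<^sup>2)"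
    using assms by (intro integral_le_sq G_finite) (auto simp: G_def)
  also have "\<dots> = h^3/3" using sq_right[of 0 h] assms by simp
  finally show ?case by simp
next
  case (Suc n)
  have ne: "G h n \<noteq> {}" using Suc.hyps by (auto simp: G_def)
  have integ: "phi (G h (Suc n)) integrable_on {0..real (Suc n) * h}"
    using ne by (intro integrable_continuous_interval phi_cont G_finite) (auto simp: G_Suc)
  have E: "integral {0..real (Suc n) * h} (phi (G h (Suc n))) =
        integral {0..real n * h} (phi (G h (Suc n))) + integral {real n * h..real (Suc n) * h} (phi (G h (Suc n)))"
    using Henstock_Kurzweil_Integration.integral_combine[OF _ _ integ, of "real n * h"] assms
    by (simp add: mult_right_mono)
  have L1: "integral {0..real n * h} (phi (G h (Suc n))) \<le> integral {0..real n * h} (phi (G h n))"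
    using ne assms
    by (intro integral_le integrable_continuous_interval phi_cont phi_mono G_finite) (auto simp: G_Suc)
  have L2: "integral {real n * h..real (Suc n) * h} (phi (G h (Suc n))) \<le> h^3/12"
  proof -
    have "real (Suc n) * h = real n * h + h" by (simp add: algebra_simps)
    moreover have "integral {real n * h..real n * h + h} (phi (G h (Suc n))) \<le> h^3/12"
    proof (intro cell_bound G_finite)
      show "real n * h \<in> G h (Suc n)" using Suc.hyps by (simp add: G_Suc G_mem)
      have "real n * h + h = real (Suc n) * h" by (simp add: algebra_simps)
      then show "real n * h + h \<in> G h (Suc n)" by (simp only: G_Suc) blast
    qed (use assms in auto)
    ultimately show ?thesis by simp
  qed
  have "integral {0..real (Suc n) * h} (phi (G h (Suc n))) \<le> integral {0..real n * h} (phi (G h n)) + h^3/12"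
    using E L1 L2 by linarith
  then show ?case using Suc.IH by (simp add: field_simps)
qed

lemma upper_total:
  assumes "M \<ge> (1::nat)"
  defines "h \<equiv> 1 / (4 * real M)"
  shows "integral {0..1} (phi (G h (4*M-1))) \<le> h^3/3 + (4*real M - 2)*h^3/12 + h^3/3"
proof -
  have h0: "h > 0" using assms by simp
  have m1: "4*M - 1 \<ge> 1" using assms by simp
  have rm: "real (4*M-1) = 4 * real M - 1" using assms by (simp add: of_nat_diff)
  have e: "real (4*M-1) * h + h = 1" using assms rm by (simp add: h_def field_simps)
  have ne: "G h (4*M-1) \<noteq> {}" using m1 by (auto simp: G_def)
  have integ: "phi (G h (4*M-1)) integrable_on {0..1}"
    using ne by (intro integrable_continuous_interval phi_cont G_finite)
  have le1: "real (4*M-1) * h \<le> 1" using e h0 by linarith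
  have E: "integral {0..1} (phi (G h (4*M-1))) = integral {0..real (4*M-1) * h} (phi (G h (4*M-1))) + integral {real (4*M-1) * h..1} (phi (G h (4*M-1)))"
    using Henstock_Kurzweil_Integration.integral_combine[OF _ le1 integ] h0 by simp
  have L1: "integral {0..real (4*M-1) * h} (phi (G h (4*M-1))) \<le> h^3/3 + (4*real M - 2)*h^3/12"
    using upper_grid[OF h0 m1] rm by simp
  have "integral {real (4*M-1) * h..1} (phi (G h (4*M-1))) \<le> integral {real (4*M-1) * h..1} (\<lambda>x. (x - real (4*M-1) * h)\<^sup>2)"
    using le1 m1 by (intro integral_le_sq G_finite G_mem) auto
  also have "\<dots> = h^3/3" using sq_left[OF le1] e by (metis add_diff_cancel_left')
  finally show ?thesis using E L1 by linarith
qed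

lemma V_bounds:
  fixes n :: nat
  defines "V \<equiv> cond_quant_err unif01 {1/4, 1/2}"
  shows "n \<ge> 2 \<Longrightarrow> V n \<ge> 1/(12 * (real n)^2)"
    and "n \<ge> 5 \<Longrightarrow> V n \<le> (real n + 5)/(12 * (real n - 4)^3)"
proof -
  define \<beta> :: "real set" where "\<beta> = {1/4, 1/2}"
  have cb: "card \<beta> = 2" by (simp add: \<beta>_def)
  define A where "A = {\<alpha> :: real set. finite \<alpha> \<and> card \<alpha> \<le> n - card \<beta>}"
  define f where "f = (\<lambda>\<alpha>. integral\<^sup>L unif01 (\<lambda>x. Min ((\<lambda>a. (x - a)\<^sup>2) ` (\<alpha> \<union> \<beta>))))"
  have Vn: "V n = (INF \<alpha>\<in>A. f \<alpha>)" unfolding V_def cond_quant_err_def A_def f_def \<beta>_def by simp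
  have fe: "f \<alpha> = integral {0..1} (phi (\<alpha> \<union> \<beta>))" if "finite \<alpha>" for \<alpha>
  proof -
    have "(\<lambda>x. Min ((\<lambda>a. (x - a)\<^sup>2) ` (\<alpha> \<union> \<beta>))) = phi (\<alpha> \<union> \<beta>)"
      by (simp add: phi_def[abs_def])
    moreover have "continuous_on UNIV (phi (\<alpha> \<union> \<beta>))"
      using that by (intro phi_cont) (auto simp: \<beta>_def)
    ultimately show ?thesis unfolding f_def using unif01_integral by simp
  qed
  have Ane: "A \<noteq> {}" using A_def by (rule_tac ex_in_conv[THEN iffD1]) (rule exI[of _ "{}"], simp)
  have lb: "f \<alpha> \<ge> 1/(12 * (real n)^2)" if "\<alpha> \<in> A" "n \<ge> 2" for \<alpha>
  proof -
    have fin: "finite \<alpha>" and ca: "card \<alpha> \<le> n - 2" using that cb by (auto simp: A_def)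
    have fU: "finite (\<alpha> \<union> \<beta>)" using fin by (simp add: \<beta>_def)
    have ne: "\<alpha> \<union> \<beta> \<noteq> {}" by (simp add: \<beta>_def)
    have cU: "card (\<alpha> \<union> \<beta>) \<le> n" using card_Un_le[of \<alpha> \<beta>] ca cb that(2) by linarith
    have cU1: "card (\<alpha> \<union> \<beta>) \<ge> 1" using fU ne by (simp add: Suc_leI card_gt_0_iff)
    have "1/(12 * (real n)^2) \<le> 1/(12 * (real (card (\<alpha> \<union> \<beta>)))^2)"
      using cU cU1 by (intro divide_left_mono mult_left_mono power_mono mult_pos_pos) auto
    also have "\<dots> = (1-0)^3/(12 * (real (card (\<alpha> \<union> \<beta>)))^2)" by simp
    also have "\<dots> \<le> integral {0..1} (phi (\<alpha> \<union> \<beta>))"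
    proof -
      have LB: "\<forall>u v. u \<le> v \<longrightarrow> integral {u..v} (phi (\<alpha> \<union> \<beta>)) \<ge> (v-u)^3/(12 * (real (card (\<alpha> \<union> \<beta>)))^2)"
        using lower_bound[OF fU] ne by blast
      show ?thesis using LB[rule_format, of 0 1] by simp
    qed
    finally show ?thesis using fe[OF fin] by simp
  qed
  show "n \<ge> 2 \<Longrightarrow> V n \<ge> 1/(12 * (real n)^2)"
    unfolding Vn by (rule cINF_greatest[OF Ane]) (rule lb)
  assume n5: "n \<ge> 5"
  define M where "M = (n - 1) div 4"
  have M1: "M \<ge> 1" using n5 by (simp add: M_def)
  have M4: "4 * M \<le> n - 1" "n - 4 \<le> 4 * M" using n5 unfolding M_def by auto
  define h where "h = 1 / (4 * real M)"
  have h0: "h > 0" using M1 by (simp add: h_def)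
  define \<alpha> where "\<alpha> = G h (4*M-1)"
  have inj: "inj_on (\<lambda>j. real j * h) {1..4*M-1}" using h0 by (auto simp: inj_on_def)
  have ca: "card \<alpha> = 4*M-1" unfolding \<alpha>_def G_def using card_image[OF inj] by simp
  have aA: "\<alpha> \<in> A" using ca M4 cb by (simp add: A_def \<alpha>_def G_finite)
  have q: "1/4 \<in> \<alpha>"
  proof -
    have "real M * h = 1/4" using M1 by (simp add: h_def)
    moreover have "real M * h \<in> \<alpha>" unfolding \<alpha>_def using M1 by (intro G_mem) auto
    ultimately show ?thesis by metis
  qed
  have hf: "1/2 \<in> \<alpha>"
  proof -
    have "real (2*M) * h = 1/2" using M1 by (simp add: h_def)
    moreover have "real (2*M) * h \<in> \<alpha>" unfolding \<alpha>_def using M1 by (intro G_mem) auto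
    ultimately show ?thesis by metis
  qed
  have U: "\<alpha> \<union> \<beta> = \<alpha>" using q hf by (auto simp: \<beta>_def)
  have "V n \<le> f \<alpha>"
    unfolding Vn
  proof (rule cINF_lower[OF _ aA])
    show "bdd_below (f ` A)" using lb n5 by (intro bdd_belowI[of _ "1/(12 * (real n)^2)"]) auto
  qed
  also have "f \<alpha> = integral {0..1} (phi (G h (4*M-1)))"
    using fe[of \<alpha>] U by (simp add: \<alpha>_def G_finite)
  also have "\<dots> \<le> h^3/3 + (4*real M - 2)*h^3/12 + h^3/3"
    using upper_total[OF M1] by (simp add: h_def)
  also have "\<dots> = (4*real M + 6)/(12*(4*real M)^3)"
    using M1 by (simp add: h_def field_simps power3_eq_cube)
  also have "\<dots> \<le> (real n + 5)/(12 * (real n - 4)^3)"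
  proof -
    have K1: "real n - 4 \<le> 4 * real M" "4 * real M \<le> real n - 1" using M4 n5 by linarith+
    have p: "real n - 4 > 0" using n5 by simp
    show ?thesis
      using K1 p by (intro frac_le mult_left_mono power_mono mult_pos_pos zero_less_power) auto
  qed
  finally show "V n \<le> (real n + 5)/(12 * (real n - 4)^3)" .
qed

theorem theorem3p12:
  defines "V \<equiv> cond_quant_err unif01 {1/4, 1/2}"
  shows "convergent V \<and>
         (\<lambda>n. (real n)\<^sup>2 * (V n - lim V)) \<longlonglongrightarrow> 1/12"
proof -
  have lo: "\<forall>\<^sub>F n in sequentially. 1/(12 * (real n)^2) \<le> V n"
    by (rule eventually_mono[OF eventually_ge_at_top[of 2]]) (use V_bounds(1) in \<open>simp add: V_def\<close>)
  have hi: "\<forall>\<^sub>F n in sequentially. V n \<le> (real n + 5)/(12 * (real n - 4)^3)"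
    by (rule eventually_mono[OF eventually_ge_at_top[of 5]]) (use V_bounds(2) in \<open>simp add: V_def\<close>)
  have t1: "(\<lambda>n. 1/(12 * (real n)^2)) \<longlonglongrightarrow> 0" by real_asymp
  have t2: "(\<lambda>n. (real n + 5)/(12 * (real n - 4)^3)) \<longlonglongrightarrow> 0" by real_asymp
  have V0: "V \<longlonglongrightarrow> 0" using tendsto_sandwich[OF lo hi t1 t2] .
  then have cV: "convergent V" and lV: "lim V = 0" by (auto simp: convergent_def limI)
  have lo2: "\<forall>\<^sub>F n in sequentially. (real n)\<^sup>2 * (1/(12 * (real n)^2)) \<le> (real n)\<^sup>2 * (V n - lim V)"
    using lo by (rule eventually_mono) (rule mult_left_mono, simp_all add: lV)
  have hi2: "\<forall>\<^sub>F n in sequentially. (real n)\<^sup>2 * (V n - lim V) \<le> (real n)\<^sup>2 * ((real n + 5)/(12 * (real n - 4)^3))"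
    using hi by (rule eventually_mono) (rule mult_left_mono, simp_all add: lV)
  have t3: "(\<lambda>n. (real n)\<^sup>2 * (1/(12 * (real n)^2))) \<longlonglongrightarrow> 1/12" by real_asymp
  have t4: "(\<lambda>n. (real n)\<^sup>2 * ((real n + 5)/(12 * (real n - 4)^3))) \<longlonglongrightarrow> 1/12" by real_asymp
  show ?thesis using cV tendsto_sandwich[OF lo2 hi2 t3 t4] by simp
qed

end
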